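(* Let $G$ be a finite simple graph with a $C_3$-free vertex $x$, and let $X=N_G[x]$, so that the induced subgraph on $X$ is a star $K_{1,m}$ with center $x$ and $m\ge 1$. Let $\pi:V(G)\to V(G')$ be a bijection such that: (i) $\pi(v)=v'$ for every $v\in V(G)\setminus X$; (ii) $\pi(v)\neq v'$ for every $v\in X$; (iii) if $m\ge 2$, then for all $u,v\in X$, $\pi(v)=u'$ implies $\pi(u)\neq v'$. Then no separable $\gamma$-set of $G$ is effective under $\pi$.
   Context: For a graph $G$, a set $D\subseteq V(G)$ is dominating if every vertex not in $D$ has a neighbor in $D$; $\gamma(G)$ is the minimum size of a dominating set, and a $\gamma$-set is a dominating set of size $\gamma(G)$. For sets $D,S$ write $D\succ S$ if every vertex of $S$ has a neighbor in $D$. Let $G'$ be a disjoint copy of $G$, the copy of $v\in V(G)$ being denoted $v'$ and $A'=\{v':v\in A\}$. A $\gamma$-set $A$ of $G$ is separable (an $A_1$-$\gamma$-set) if it can be partitioned into two nonempty sets $A_1,A_2$ with $A_1\succ V(G)\setminus A$. Given such a partition and a bijection $\pi:V(G)\to V(G')$, put $B_1'=\pi(A_1)$, $B_2'=\pi(A_2)$, $B'=\pi(A)$. The separable $\gamma$-set $A=A_1\cup A_2$ is effective under $\pi$ if $B'$ is a $B_2'$-$\gamma$-set of $G'$, i.e. $B'$ is a $\gamma$-set of $G'$ partitioned into the nonempty sets $B_1',B_2'$ with $B_2'\succ V(G')\setminus B'$. A non-isolated vertex is $C_3$-free if it belongs to no triangle of $G$. *)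

theory Defs
  imports Main
begin

definition simple_graph :: "'a set \<Rightarrow> ('a \<Rightarrow> 'a \<Rightarrow> bool) \<Rightarrow> bool" where
  "simple_graph V E \<longleftrightarrow> finite V \<and> (\<forall>u v. E u v \<longrightarrow> u \<in> V \<and> v \<in> V)
     \<and> (\<forall>u v. E u v \<longrightarrow> E v u) \<and> (\<forall>v. \<not> E v v)"

definition dominates :: "('a \<Rightarrow> 'a \<Rightarrow> bool) \<Rightarrow> 'a set \<Rightarrow> 'a set \<Rightarrow> bool" where
  "dominates E D S \<longleftrightarrow> (\<forall>s\<in>S. \<exists>d\<in>D. E d s)"

definition dominating_set :: "'a set \<Rightarrow> ('a \<Rightarrow> 'a \<Rightarrow> bool) \<Rightarrow> 'a set \<Rightarrow> bool" where
  "dominating_set V E D \<longleftrightarrow> D \<subseteq> V \<and> dominates E D (V - D)"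

definition domination_number :: "'a set \<Rightarrow> ('a \<Rightarrow> 'a \<Rightarrow> bool) \<Rightarrow> nat" where
  "domination_number V E = Min (card ` {D. dominating_set V E D})"

definition gamma_set :: "'a set \<Rightarrow> ('a \<Rightarrow> 'a \<Rightarrow> bool) \<Rightarrow> 'a set \<Rightarrow> bool" where
  "gamma_set V E D \<longleftrightarrow> dominating_set V E D \<and> card D = domination_number V E"

definition separable_partition ::
  "'a set \<Rightarrow> ('a \<Rightarrow> 'a \<Rightarrow> bool) \<Rightarrow> 'a set \<Rightarrow> 'a set \<Rightarrow> 'a set \<Rightarrow> bool" where
  "separable_partition V E A A1 A2 \<longleftrightarrow> gamma_set V E A \<and> A = A1 \<union> A2 \<and> A1 \<inter> A2 = {}
     \<and> A1 \<noteq> {} \<and> A2 \<noteq> {} \<and> dominates E A1 (V - A)"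

definition effective_under ::
  "'b set \<Rightarrow> ('b \<Rightarrow> 'b \<Rightarrow> bool) \<Rightarrow> ('a \<Rightarrow> 'b) \<Rightarrow> 'a set \<Rightarrow> 'a set \<Rightarrow> 'a set \<Rightarrow> bool" where
  "effective_under V' E' \<pi> A A1 A2 \<longleftrightarrow>
     gamma_set V' E' (\<pi> ` A) \<and> \<pi> ` A = \<pi> ` A1 \<union> \<pi> ` A2 \<and> \<pi> ` A1 \<inter> \<pi> ` A2 = {}
     \<and> \<pi> ` A1 \<noteq> {} \<and> \<pi> ` A2 \<noteq> {} \<and> dominates E' (\<pi> ` A2) (V' - \<pi> ` A)"

definition C3_free_vertex :: "('a \<Rightarrow> 'a \<Rightarrow> bool) \<Rightarrow> 'a \<Rightarrow> bool" where
  "C3_free_vertex E x \<longleftrightarrow> (\<exists>y. E x y) \<and> \<not> (\<exists>y z. E x y \<and> E x z \<and> E y z)"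

definition closed_nbhd :: "'a set \<Rightarrow> ('a \<Rightarrow> 'a \<Rightarrow> bool) \<Rightarrow> 'a \<Rightarrow> 'a set" where
  "closed_nbhd V E x = insert x {v \<in> V. E x v}"

(* G' = (V',E') is a copy of G = (V,E) via the isomorphism c (c v = v') *)
definition graph_copy ::
  "'a set \<Rightarrow> ('a \<Rightarrow> 'a \<Rightarrow> bool) \<Rightarrow> 'b set \<Rightarrow> ('b \<Rightarrow> 'b \<Rightarrow> bool) \<Rightarrow> ('a \<Rightarrow> 'b) \<Rightarrow> bool" where
  "graph_copy V E V' E' c \<longleftrightarrow> bij_betw c V V'
     \<and> (\<forall>u v. E' u v \<longrightarrow> u \<in> V' \<and> v \<in> V')
     \<and> (\<forall>u\<in>V. \<forall>v\<in>V. E' (c u) (c v) \<longleftrightarrow> E u v)"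

end

theory Submission
  imports Defs
begin

lemma gamma_min:
  assumes "finite V" "gamma_set V E A" "dominating_set V E D"
  shows "card A \<le> card D"
proof -
  have fin: "finite (card ` {D. dominating_set V E D})"
  proof (rule finite_imageI)
    show "finite {D. dominating_set V E D}"
      by (rule finite_subset[of _ "Pow V"]) (auto simp: dominating_set_def assms(1))
  qed
  have "card A = Min (card ` {D. dominating_set V E D})"
    using assms(2) by (simp add: gamma_set_def domination_number_def)
  also have "\<dots> \<le> card D" using fin assms(3) by (intro Min_le) auto
  finally show ?thesis .
qed

lemma no_nbr:
  assumes "finite V" "\<forall>v. \<not> E v v" "gamma_set V E A" "A1 \<subseteq> A" "dominates E A1 (V - A)"
    "a \<in> A" "a \<notin> A1" "b \<in> A" "E b a"
  shows False
proof -
  have AV: "A \<subseteq> V" "finite A" using assms(1,3) finite_subset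
    by (auto simp: gamma_set_def dominating_set_def)
  have ba: "b \<noteq> a" using assms(2,9) by auto
  have "dominating_set V E (A - {a})"
    unfolding dominating_set_def dominates_def
  proof (intro conjI ballI)
    show "A - {a} \<subseteq> V" using AV by auto
    fix s assume s: "s \<in> V - (A - {a})"
    show "\<exists>d\<in>A - {a}. E d s"
    proof (cases "s = a")
      case True then show ?thesis using ba assms(8,9) by blast
    next
      case False then have "s \<in> V - A" using s by auto
      then obtain d where "d \<in> A1" "E d s" using assms(5) by (auto simp: dominates_def)
      then show ?thesis using assms(4,7) by auto
    qed
  qed
  then have "card A \<le> card (A - {a})" using gamma_min assms(1,3) by blast
  moreover have "card (A - {a}) < card A" by (rule card_Diff1_less[OF AV(2) assms(6)])
  ultimately show False by simp
qed

theorem mainTheorem2: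
  fixes V :: "'a set" and E :: "'a \<Rightarrow> 'a \<Rightarrow> bool"
    and V' :: "'b set" and E' :: "'b \<Rightarrow> 'b \<Rightarrow> bool"
    and c :: "'a \<Rightarrow> 'b" and \<pi> :: "'a \<Rightarrow> 'b" and x :: 'a
  assumes G: "simple_graph V E"
    and copy: "graph_copy V E V' E' c"
    and xV: "x \<in> V"
    and x_free: "C3_free_vertex E x"
    and pi_bij: "bij_betw \<pi> V V'"
    and i: "\<forall>v \<in> V - closed_nbhd V E x. \<pi> v = c v"
    and ii: "\<forall>v \<in> closed_nbhd V E x. \<pi> v \<noteq> c v"
    and iii: "card (closed_nbhd V E x) - 1 \<ge> 2 \<longrightarrow>
              (\<forall>u \<in> closed_nbhd V E x. \<forall>v \<in> closed_nbhd V E x. \<pi> v = c u \<longrightarrow> \<pi> u \<noteq> c v)"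
  shows "\<not> (\<exists>A A1 A2. separable_partition V E A A1 A2 \<and> effective_under V' E' \<pi> A A1 A2)"
proof
  assume "\<exists>A A1 A2. separable_partition V E A A1 A2 \<and> effective_under V' E' \<pi> A A1 A2"
  then obtain A A1 A2 where sep: "separable_partition V E A A1 A2"
    and eff: "effective_under V' E' \<pi> A A1 A2" by blast
  define X where "X = closed_nbhd V E x"
  from G have finV: "finite V" and EV: "\<And>u v. E u v \<Longrightarrow> u \<in> V \<and> v \<in> V"
    and Esym: "\<And>u v. E u v \<Longrightarrow> E v u" and Eirr: "\<And>v. \<not> E v v"
    by (auto simp: simple_graph_def)
  from copy have cbij: "bij_betw c V V'" and E'V: "\<And>u v. E' u v \<Longrightarrow> u \<in> V' \<and> v \<in> V'"
    and cE: "\<And>u v. u \<in> V \<Longrightarrow> v \<in> V \<Longrightarrow> E' (c u) (c v) = E u v"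
    by (auto simp: graph_copy_def)
  have cinj: "inj_on c V" and cimg: "c ` V = V'" using cbij by (auto simp: bij_betw_def)
  have pinj: "inj_on \<pi> V" and pimg: "\<pi> ` V = V'" using pi_bij by (auto simp: bij_betw_def)
  have finV': "finite V'" using finV cimg by auto
  have E'irr: "\<And>v. \<not> E' v v"
  proof
    fix v assume "E' v v"
    then have "v \<in> V'" using E'V by blast
    then obtain u where "u \<in> V" "v = c u" using cimg by auto
    then show False using \<open>E' v v\<close> cE[of u u] Eirr by simp
  qed
  have Xdef: "\<And>v. v \<in> X \<longleftrightarrow> v = x \<or> (v \<in> V \<and> E x v)" by (auto simp: X_def closed_nbhd_def)
  have XV: "X \<subseteq> V" using xV by (auto simp: Xdef)
  have nbX: "\<And>v. E v x \<Longrightarrow> v \<in> X" using Xdef Esym EV by blast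
  have notri: "\<And>a b. E x a \<Longrightarrow> E x b \<Longrightarrow> \<not> E a b" using x_free unfolding C3_free_vertex_def by blast
  have piNX: "\<And>v. v \<in> V \<Longrightarrow> v \<notin> X \<Longrightarrow> \<pi> v = c v" using i X_def by auto
  have xX: "x \<in> X" using Xdef by simp
  have leafX: "\<And>v. v \<in> X \<Longrightarrow> v \<noteq> x \<Longrightarrow> E x v" using Xdef by blast
  have iiX: "\<And>v. v \<in> X \<Longrightarrow> \<pi> v \<noteq> c v" using ii X_def by auto
  have piback: "\<And>v w. v \<in> V \<Longrightarrow> w \<in> X \<Longrightarrow> \<pi> v = c w \<Longrightarrow> v \<in> X"
  proof (rule ccontr)
    fix v w assume v: "v \<in> V" and w: "w \<in> X" and e: "\<pi> v = c w" and n: "v \<notin> X"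
    then have "c v = c w" using piNX by auto
    then have "v = w" using cinj v w XV by (meson inj_onD subsetD)
    then show False using n w by simp
  qed
  have piE: "\<And>v w. v \<in> V \<Longrightarrow> v \<notin> X \<Longrightarrow> w \<in> V \<Longrightarrow> E' (\<pi> v) (c w) \<Longrightarrow> E v w"
  proof -
    fix v w assume v: "v \<in> V" "v \<notin> X" and w: "w \<in> V" and e: "E' (\<pi> v) (c w)"
    have "\<pi> v = c v" using piNX[OF v] .
    then have "E' (c v) (c w)" using e by simp
    then show "E v w" using cE[OF v(1) w] by simp
  qed
  have piX: "\<And>v. v \<in> X \<Longrightarrow> \<exists>w\<in>X. \<pi> v = c w"
  proof -
    fix v assume v: "v \<in> X"
    then have "\<pi> v \<in> V'" using XV pimg by auto
    then obtain w where w: "w \<in> V" "\<pi> v = c w" using cimg by auto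
    have "w \<in> X"
    proof (rule ccontr)
      assume "w \<notin> X" then have "\<pi> w = c w" using piNX w by auto
      then have "w = v" using pinj w v XV by (metis inj_onD subsetD)
      then show False using \<open>w \<notin> X\<close> v by simp
    qed
    then show "\<exists>w\<in>X. \<pi> v = c w" using w by auto
  qed
  from sep have gA: "gamma_set V E A" and AU: "A = A1 \<union> A2" and disj: "A1 \<inter> A2 = {}"
    and D1: "dominates E A1 (V - A)" by (auto simp: separable_partition_def)
  from eff have gB: "gamma_set V' E' (\<pi> ` A)" and disjB: "\<pi> ` A1 \<inter> \<pi> ` A2 = {}"
    and D2: "dominates E' (\<pi> ` A2) (V' - \<pi> ` A)" by (auto simp: effective_under_def)
  have AV: "A \<subseteq> V" using gA by (auto simp: gamma_set_def dominating_set_def)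
  have P1: "\<And>a b. a \<in> A2 \<Longrightarrow> b \<in> A \<Longrightarrow> E b a \<Longrightarrow> False"
  proof -
    fix a b
    assume h: "a \<in> A2" "b \<in> A" "E b a"
    have Eirr': "\<forall>v. \<not> E v v" using Eirr by simp
    have A1A: "A1 \<subseteq> A" using AU by simp
    have aA: "a \<in> A" using h(1) AU by simp
    have aA1: "a \<notin> A1" using h(1) disj by blast
    show False by (rule no_nbr[OF finV Eirr' gA A1A D1 aA aA1 h(2) h(3)])
  qed
  have P2: "\<And>a b. a \<in> \<pi> ` A1 \<Longrightarrow> b \<in> \<pi> ` A \<Longrightarrow> E' b a \<Longrightarrow> False"
  proof -
    fix a b
    assume h: "a \<in> \<pi> ` A1" "b \<in> \<pi> ` A" "E' b a"
    have Eirr': "\<forall>v. \<not> E' v v" using E'irr by simp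
    have A2A: "\<pi> ` A2 \<subseteq> \<pi> ` A" using AU by blast
    have aA: "a \<in> \<pi> ` A" using h(1) AU by blast
    have aA1: "a \<notin> \<pi> ` A2" using h(1) disjB by blast
    show False by (rule no_nbr[OF finV' Eirr' gB A2A D2 aA aA1 h(2) h(3)])
  qed
  have L: "\<And>l. l \<in> A \<Longrightarrow> E x l \<Longrightarrow> c l \<notin> \<pi> ` A \<Longrightarrow> \<exists>a2\<in>A2. \<pi> a2 = c x"
  proof -
    fix l assume l: "l \<in> A" "E x l" "c l \<notin> \<pi> ` A"
    have lV: "l \<in> V" using l AV by auto
    then have "c l \<in> V' - \<pi> ` A" using cimg l by auto
    then obtain a2 where a2: "a2 \<in> A2" "E' (\<pi> a2) (c l)" using D2 by (auto simp: dominates_def)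
    have a2V: "a2 \<in> V" using a2 AU AV by auto
    show "\<exists>a2\<in>A2. \<pi> a2 = c x"
    proof (cases "a2 \<in> X")
      case False
      then have "E a2 l" using piE[OF a2V False lV] a2 by blast
      then show ?thesis using P1 a2 l Esym by blast
    next
      case True
      then obtain v where v: "v \<in> X" "\<pi> a2 = c v" using piX by blast
      then have "E v l" using a2 cE lV XV by auto
      then have "v = x" using leafX[OF v(1)] notri[of v l] l(2) by blast
      then show ?thesis using v a2 by blast
    qed
  qed
  show False
  proof (cases "x \<in> A")
    case xA: True
    show False
    proof (cases "x \<in> A2")
      case xA2: True
      have AX: "\<And>a. a \<in> A \<Longrightarrow> a \<in> X \<Longrightarrow> a = x"
      proof (rule ccontr)
        fix a assume a: "a \<in> A" "a \<in> X" "a \<noteq> x"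
        then have "E a x" using leafX Esym by blast
        then show False using P1[OF xA2 a(1)] by blast
      qed
      have cx: "c x \<notin> \<pi> ` A"
      proof
        assume "c x \<in> \<pi> ` A"
        then obtain w where w: "w \<in> A" "\<pi> w = c x" by auto
        then have "w \<in> X" using piback[OF _ xX] AV by blast
        then have "w = x" using AX w by blast
        then show False using w iiX \<open>w \<in> X\<close> by blast
      qed
      then have "c x \<in> V' - \<pi> ` A" using cimg xV by auto
      then obtain a2 where a2: "a2 \<in> A2" "E' (\<pi> a2) (c x)" using D2 by (auto simp: dominates_def)
      have a2V: "a2 \<in> V" using a2 AU AV by auto
      have "a2 \<in> X"
      proof (rule ccontr)
        assume "a2 \<notin> X"
        then have "E a2 x" using piE[OF a2V _ xV] a2 by blast
        then show False using nbX \<open>a2 \<notin> X\<close> by blast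
      qed
      then have "a2 = x" using AX a2 AU by blast
      obtain y where y: "y \<in> X" "\<pi> x = c y" using piX[OF xX] by blast
      have Eyx: "E y x" using a2 \<open>a2 = x\<close> y cE XV xV by auto
      have yV: "y \<in> V" using y XV by auto
      have "y \<notin> A" using AX y Eyx Eirr by blast
      then obtain a1 where a1: "a1 \<in> A1" "E a1 y" using D1 yV by (auto simp: dominates_def)
      have "a1 \<notin> X" using AX a1 AU disj xA2 by blast
      have a1V: "a1 \<in> V" using a1 AU AV by auto
      then have "\<pi> a1 = c a1" using piNX \<open>a1 \<notin> X\<close> by auto
      moreover have "E' (\<pi> x) (c a1)" using y cE yV a1V a1 Esym by auto
      moreover have "\<pi> a1 \<in> \<pi> ` A1" using a1 by blast
      moreover have "\<pi> x \<in> \<pi> ` A" using xA by blast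
      ultimately show False using P2[of "\<pi> a1" "\<pi> x"] by simp
    next
      case xA1: False
      then have xA1: "x \<in> A1" using xA AU by auto
      obtain y where y: "y \<in> X" "\<pi> x = c y" using piX[OF xX] by blast
      have "y \<noteq> x" using y iiX[OF xX] by blast
      then have Exy: "E x y" using leafX y by blast
      have yV: "y \<in> V" using y XV by auto
      have cx: "c x \<notin> \<pi> ` A"
      proof
        assume "c x \<in> \<pi> ` A"
        moreover have "E' (c x) (c y)" using cE xV yV Exy by auto
        moreover have "\<pi> x \<in> \<pi> ` A1" using xA1 by blast
        ultimately show False using P2[of "\<pi> x" "c x"] y(2) by simp
      qed
      then have "c x \<in> V' - \<pi> ` A" using cimg xV by auto
      then obtain a2 where a2: "a2 \<in> A2" "E' (\<pi> a2) (c x)" using D2 by (auto simp: dominates_def)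
      have a2V: "a2 \<in> V" using a2 AU AV by auto
      have "a2 \<in> X"
      proof (rule ccontr)
        assume "a2 \<notin> X"
        then have "E a2 x" using piE[OF a2V _ xV] a2 by blast
        then show False using nbX \<open>a2 \<notin> X\<close> by blast
      qed
      moreover have "a2 \<noteq> x" using a2 xA1 disj by blast
      ultimately have "E x a2" using leafX by blast
      then show False using P1 a2 xA by blast
    qed
  next
    case xnA: False
    then have "x \<in> V - A" using xV by auto
    then obtain y where yA1: "y \<in> A1" and Eyx: "E y x" using D1 by (auto simp: dominates_def)
    have Exy: "E x y" using Eyx Esym by auto
    have yX: "y \<in> X" using nbX Eyx by auto
    have yA: "y \<in> A" using yA1 AU by auto
    have yV: "y \<in> V" using yX XV by auto
    show False
    proof (cases "c x \<in> \<pi> ` A")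
      case True
      then obtain w where w: "w \<in> A" "\<pi> w = c x" by auto
      have wX: "w \<in> X" using piback[OF _ xX] AV w by blast
      have "w \<noteq> x" using w xnA by auto
      then have Exw: "E x w" using leafX wX by blast
      show False
      proof (cases "w \<in> A1")
        case True
        have cxA1: "c x \<in> \<pi> ` A1" using True w(2) by (metis imageI)
        have "c y \<notin> \<pi> ` A"
        proof
          assume "c y \<in> \<pi> ` A"
          moreover have "E' (c y) (c x)" using cE xV yV Eyx by auto
          ultimately show False using P2[OF cxA1] by blast
        qed
        then obtain a2 where a2: "a2 \<in> A2" "\<pi> a2 = c x" using L yA Exy by blast
        then have "c x \<in> \<pi> ` A2" by (metis imageI)
        then show False using disjB cxA1 by blast
      next
        case False
        then have "w \<in> A2" using w AU by auto
        then have "w \<noteq> y" using yA1 disj by auto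
        obtain z where z: "z \<in> X" "\<pi> y = c z" using piX yX by blast
        have "z \<noteq> x"
        proof
          assume "z = x"
          then have "\<pi> y = \<pi> w" using z w by simp
          then have "y = w" using pinj yV w AV by (meson inj_onD subsetD)
          then show False using \<open>w \<noteq> y\<close> by simp
        qed
        then have Exz: "E x z" using leafX z by blast
        have "E' (c x) (c z)" using cE xV z XV Exz by auto
        moreover have "\<pi> y \<in> \<pi> ` A1" using yA1 by blast
        ultimately show False using P2[of "\<pi> y" "c x"] True z(2) by simp
      qed
    next
      case cxnA: False
      then have "c x \<in> V' - \<pi> ` A" using cimg xV by auto
      then obtain u where uA2: "u \<in> A2" and u2: "E' (\<pi> u) (c x)" using D2 by (auto simp: dominates_def)
      have uV: "u \<in> V" using uA2 AU AV by auto
      have uX: "u \<in> X"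
      proof (rule ccontr)
        assume "u \<notin> X"
        then have "E u x" using piE[OF uV _ xV] u2 by blast
        then show False using nbX \<open>u \<notin> X\<close> by blast
      qed
      have uA: "u \<in> A" using uA2 AU by auto
      have "u \<noteq> x" using uA xnA by auto
      then have Exu: "E x u" using leafX uX by blast
      have finA: "finite A" using AV finV finite_subset by auto
      have finA1: "finite A1" and finA2: "finite A2" using finA AU by auto
      have domA': "dominating_set V E (A1 \<union> (A2 - X) \<union> {x})"
        unfolding dominating_set_def dominates_def
      proof (intro conjI ballI)
        show "A1 \<union> (A2 - X) \<union> {x} \<subseteq> V" using AV AU xV by auto
        fix s assume s: "s \<in> V - (A1 \<union> (A2 - X) \<union> {x})"
        show "\<exists>d\<in>A1 \<union> (A2 - X) \<union> {x}. E d s"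
        proof (cases "s \<in> X")
          case True then show ?thesis using s leafX by auto
        next
          case False
          then have "s \<in> V - A" using s AU by auto
          then show ?thesis using D1 by (auto simp: dominates_def)
        qed
      qed
      have "card A \<le> card (A1 \<union> (A2 - X) \<union> {x})" using gamma_min[OF finV gA domA'] .
      also have "\<dots> \<le> card A1 + card (A2 - X) + 1"
        using card_Un_le[of "A1 \<union> (A2 - X)" "{x}"] card_Un_le[of A1 "A2 - X"] by simp
      finally have c1: "card A \<le> card A1 + card (A2 - X) + 1" .
      have "card A = card A1 + card A2" using AU disj finA1 finA2 card_Un_disjoint[of A1 A2] by simp
      moreover have "card A2 = card (A2 - X) + card (A2 \<inter> X)"
        using card_Int_Diff[OF finA2, of X] by simp
      ultimately have cA2X: "card (A2 \<inter> X) \<le> 1" using c1 by linarith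
      have piAV: "\<pi> ` A \<subseteq> V'" using AV pimg by auto
      have cxV': "c x \<in> V'" using cimg xV by auto
      have domB': "dominating_set V' E' (\<pi> ` A2 \<union> (\<pi> ` A1 - c ` X) \<union> {c x})"
        unfolding dominating_set_def dominates_def
      proof (intro conjI ballI)
        show "\<pi> ` A2 \<union> (\<pi> ` A1 - c ` X) \<union> {c x} \<subseteq> V'" using piAV AU cxV' by auto
        fix s assume s: "s \<in> V' - (\<pi> ` A2 \<union> (\<pi> ` A1 - c ` X) \<union> {c x})"
        show "\<exists>d\<in>\<pi> ` A2 \<union> (\<pi> ` A1 - c ` X) \<union> {c x}. E' d s"
        proof (cases "s \<in> c ` X")
          case True
          then obtain v where v: "v \<in> X" "s = c v" by auto
          then have "v \<noteq> x" using s by auto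
          then have "E x v" using leafX v by blast
          then have "E' (c x) s" using cE xV v XV by auto
          then show ?thesis by auto
        next
          case False
          then have "s \<in> V' - \<pi> ` A" using s AU by auto
          then obtain d where "d \<in> \<pi> ` A2" "E' d s" using D2 unfolding dominates_def by blast
          then show ?thesis by blast
        qed
      qed
      have finB1: "finite (\<pi> ` A1)" and finB2: "finite (\<pi> ` A2)" using finA1 finA2 by auto
      have "card (\<pi> ` A) \<le> card (\<pi> ` A2 \<union> (\<pi> ` A1 - c ` X) \<union> {c x})"
        using gamma_min[OF finV' gB domB'] .
      also have "\<dots> \<le> card (\<pi> ` A2) + card (\<pi> ` A1 - c ` X) + 1"
        using card_Un_le[of "\<pi> ` A2 \<union> (\<pi> ` A1 - c ` X)" "{c x}"] card_Un_le[of "\<pi> ` A2" "\<pi> ` A1 - c ` X"] by simp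
      finally have c2: "card (\<pi> ` A) \<le> card (\<pi> ` A2) + card (\<pi> ` A1 - c ` X) + 1" .
      have "card (\<pi> ` A) = card (\<pi> ` A1) + card (\<pi> ` A2)"
        using AU disjB finB1 finB2 card_Un_disjoint[of "\<pi> ` A1" "\<pi> ` A2"] by (simp add: image_Un)
      moreover have "card (\<pi> ` A1) = card (\<pi> ` A1 - c ` X) + card (\<pi> ` A1 \<inter> c ` X)"
        using card_Int_Diff[OF finB1, of "c ` X"] by simp
      ultimately have cB1X: "card (\<pi> ` A1 \<inter> c ` X) \<le> 1" using c2 by linarith
      have A1X: "\<And>a. a \<in> A1 \<Longrightarrow> a \<in> X \<Longrightarrow> a = y"
      proof -
        fix a assume a: "a \<in> A1" "a \<in> X"
        obtain w where "w \<in> X" "\<pi> a = c w" using piX a by blast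
        then have "\<pi> a \<in> c ` X" by (metis imageI)
        moreover have "\<pi> a \<in> \<pi> ` A1" using a by blast
        ultimately have pa: "\<pi> a \<in> \<pi> ` A1 \<inter> c ` X" by blast
        obtain w' where "w' \<in> X" "\<pi> y = c w'" using piX yX by blast
        then have "\<pi> y \<in> c ` X" by (metis imageI)
        moreover have "\<pi> y \<in> \<pi> ` A1" using yA1 by blast
        ultimately have py: "\<pi> y \<in> \<pi> ` A1 \<inter> c ` X" by blast
        have fin: "finite (\<pi> ` A1 \<inter> c ` X)" by (rule finite_Int) (rule disjI1, rule finB1)
        have "card (\<pi> ` A1 \<inter> c ` X) \<le> Suc 0" using cB1X unfolding One_nat_def .
        then have "\<forall>a1\<in>\<pi> ` A1 \<inter> c ` X. \<forall>a2\<in>\<pi> ` A1 \<inter> c ` X. a1 = a2"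
          using card_le_Suc0_iff_eq[OF fin] by blast
        then have "\<pi> a = \<pi> y" using pa py by blast
        then show "a = y" using pinj a yV XV by (meson inj_onD subsetD)
      qed
      have A2X: "\<And>a. a \<in> A2 \<Longrightarrow> a \<in> X \<Longrightarrow> a = u"
      proof -
        fix a assume a: "a \<in> A2" "a \<in> X"
        have fin: "finite (A2 \<inter> X)" by (rule finite_Int) (rule disjI1, rule finA2)
        have "card (A2 \<inter> X) \<le> Suc 0" using cA2X unfolding One_nat_def .
        then have "\<forall>a1\<in>A2 \<inter> X. \<forall>a2\<in>A2 \<inter> X. a1 = a2"
          using card_le_Suc0_iff_eq[OF fin] by blast
        then show "a = u" using a uA2 uX by blast
      qed
      have AXs: "\<And>a. a \<in> A \<Longrightarrow> a \<in> X \<Longrightarrow> a = y \<or> a = u" using A1X A2X AU by blast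
      have cyA: "c y \<in> \<pi> ` A"
      proof (rule ccontr)
        assume "c y \<notin> \<pi> ` A"
        then obtain a2 where "a2 \<in> A2" "\<pi> a2 = c x" using L yA Exy by blast
        then have "a2 \<in> A" "c x = \<pi> a2" using AU by auto
        then have "c x \<in> \<pi> ` A" by (metis imageI)
        then show False using cxnA by blast
      qed
      have cuA: "c u \<in> \<pi> ` A"
      proof (rule ccontr)
        assume "c u \<notin> \<pi> ` A"
        then obtain a2 where "a2 \<in> A2" "\<pi> a2 = c x" using L uA Exu by blast
        then have "a2 \<in> A" "c x = \<pi> a2" using AU by auto
        then have "c x \<in> \<pi> ` A" by (metis imageI)
        then show False using cxnA by blast
      qed
      obtain w where w: "w \<in> A" "\<pi> w = c y" using cyA by auto
      have "w \<in> X" using piback[OF _ yX] w AV by blast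
      then have "w = y \<or> w = u" using AXs w by blast
      moreover have "w \<noteq> y" using w iiX yX by auto
      ultimately have puy: "\<pi> u = c y" using w by auto
      obtain w' where w': "w' \<in> A" "\<pi> w' = c u" using cuA by auto
      have "w' \<in> X" using piback[OF _ uX] w' AV by blast
      then have "w' = y \<or> w' = u" using AXs w' by blast
      moreover have "w' \<noteq> u" using w' iiX uX by auto
      ultimately have pyu: "\<pi> y = c u" using w' by auto
      have "y \<noteq> u" using yA1 uA2 disj by auto
      have "{x, y, u} \<subseteq> X" using yX uX xX by auto
      moreover have "finite X" using XV finV finite_subset by auto
      ultimately have "card {x, y, u} \<le> card X" using card_mono by blast
      moreover have "card {x, y, u} = 3"
      proof -
        have "x \<noteq> y" using Exy Eirr by metis
        moreover have "x \<noteq> u" using Exu Eirr by metis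
        ultimately show ?thesis using \<open>y \<noteq> u\<close> by simp
      qed
      ultimately have "card X - 1 \<ge> 2" by linarith
      then have "card (closed_nbhd V E x) - 1 \<ge> 2" unfolding X_def .
      then have iiiX: "\<forall>u \<in> closed_nbhd V E x. \<forall>v \<in> closed_nbhd V E x. \<pi> v = c u \<longrightarrow> \<pi> u \<noteq> c v"
        by (rule mp[OF iii])
      have yX': "y \<in> closed_nbhd V E x" using yX unfolding X_def .
      have uX': "u \<in> closed_nbhd V E x" using uX unfolding X_def .
      have "\<pi> u = c y \<longrightarrow> \<pi> y \<noteq> c u" using bspec[OF bspec[OF iiiX yX'] uX'] .
      then show False using puy pyu by simp
    qed
  qed
qed

end
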